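(* Let $f\colon\{0,\dots,n\}\to\mathbb{Z}$ be $\Delta_f$-near concave and $g\colon\{0,\dots,m\}\to\mathbb{Z}$ be $\Delta_g$-near concave. Then the max-plus convolution $h\colon\{0,\dots,n+m\}\to\mathbb{Z}$, $h(k)=\max_{i+j=k}f(i)+g(j)$, is $\max\{\Delta_f,\Delta_g\}$-near concave.
   Context: A function $F\colon\{0,\dots,n\}\to\mathbb{Q}$ is convex if $F(i)-F(i-1)\le F(i+1)-F(i)$ for all $1\le i\le n-1$, and concave if $-F$ is convex. For $\Delta\ge 0$, $f\colon\{0,\dots,n\}\to\mathbb{Z}$ is $\Delta$-near concave if there is a concave $\hat f\colon\{0,\dots,n\}\to\mathbb{Q}$ with $\hat f(i)-\Delta\le f(i)\le \hat f(i)$ for all $i$. *)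

theory Defs
  imports Complex_Main
begin

text \<open>Functions on {0,...,n} are represented as total functions on nat;
  only their values on {0..n} matter.\<close>

definition convex_on_upto :: "nat \<Rightarrow> (nat \<Rightarrow> rat) \<Rightarrow> bool" where
  "convex_on_upto n F \<longleftrightarrow>
     (\<forall>i. 1 \<le> i \<and> i \<le> n - 1 \<longrightarrow> F i - F (i - 1) \<le> F (i + 1) - F i)"

definition concave_on_upto :: "nat \<Rightarrow> (nat \<Rightarrow> rat) \<Rightarrow> bool" where
  "concave_on_upto n F \<longleftrightarrow> convex_on_upto n (\<lambda>i. - F i)"

definition near_concave :: "rat \<Rightarrow> nat \<Rightarrow> (nat \<Rightarrow> int) \<Rightarrow> bool" where
  "near_concave \<Delta> n f \<longleftrightarrow>
     (\<exists>fh. concave_on_upto n fh \<and>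
        (\<forall>i\<le>n. fh i - \<Delta> \<le> of_int (f i) \<and> of_int (f i) \<le> fh i))"

definition maxplus_conv :: "nat \<Rightarrow> nat \<Rightarrow> (nat \<Rightarrow> int) \<Rightarrow> (nat \<Rightarrow> int) \<Rightarrow> nat \<Rightarrow> int" where
  "maxplus_conv n m f g k = Max {f i + g j | i j. i \<le> n \<and> j \<le> m \<and> i + j = k}"

end

theory Submission
  imports Defs
begin

lemma slope_mono:
  assumes "concave_on_upto n F" "a \<le> b" "b + 1 \<le> n"
  shows "F (b+1) - F b \<le> F (a+1) - F a"
using assms(2,3)
proof (induction b)
  case 0 thus ?case by simp
next
  case (Suc b)
  show ?case
  proof (cases "a = Suc b")
    case True thus ?thesis by simp
  next
    case False
    hence "a \<le> b" using Suc by simp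
    hence IH: "F (b+1) - F b \<le> F (a+1) - F a" using Suc by simp
    have "1 \<le> Suc b \<and> Suc b \<le> n - 1" using Suc by simp
    hence "- F (Suc b) - (- F (Suc b - 1)) \<le> - F (Suc b + 1) - (- F (Suc b))"
      using assms(1) unfolding concave_on_upto_def convex_on_upto_def by blast
    thus ?thesis using IH by simp
  qed
qed

lemma sum_lower:
  fixes F :: "nat \<Rightarrow> rat"
  assumes "x \<le> z" "\<forall>t. x \<le> t \<longrightarrow> t < z \<longrightarrow> c \<le> F (Suc t) - F t"
  shows "(of_nat z - of_nat x) * c \<le> F z - F x"
using assms proof (induction z)
  case 0 thus ?case by simp
next
  case (Suc z)
  show ?case
  proof (cases "x = Suc z")
    case True thus ?thesis by simp
  next
    case False
    hence xz: "x \<le> z" using Suc.prems by simp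
    have IH: "(of_nat z - of_nat x) * c \<le> F z - F x" using Suc.IH xz Suc.prems(2) by simp
    have "c \<le> F (Suc z) - F z" using Suc.prems(2) xz by simp
    moreover have "(of_nat (Suc z) - of_nat x) * c = (of_nat z - of_nat x) * c + c"
      by (simp add: algebra_simps)
    ultimately show ?thesis using IH by linarith
  qed
qed

lemma sum_upper:
  fixes F :: "nat \<Rightarrow> rat"
  assumes "z \<le> y" "\<forall>t. z \<le> t \<longrightarrow> t < y \<longrightarrow> F (Suc t) - F t \<le> c"
  shows "F y - F z \<le> (of_nat y - of_nat z) * c"
using assms proof (induction y)
  case 0 thus ?case by simp
next
  case (Suc y)
  show ?case
  proof (cases "z = Suc y")
    case True thus ?thesis by simp
  next
    case False
    hence xz: "z \<le> y" using Suc.prems by simp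
    have IH: "F y - F z \<le> (of_nat y - of_nat z) * c" using Suc.IH xz Suc.prems(2) by simp
    have "F (Suc y) - F y \<le> c" using Suc.prems(2) xz by simp
    moreover have "(of_nat (Suc y) - of_nat z) * c = (of_nat y - of_nat z) * c + c"
      by (simp add: algebra_simps)
    ultimately show ?thesis using IH by linarith
  qed
qed

lemma chord:
  fixes F :: "nat \<Rightarrow> rat"
  assumes conc: "concave_on_upto n F" and "x \<le> z" "z \<le> y" "y \<le> n"
  shows "(of_nat y - of_nat z) * F x + (of_nat z - of_nat x) * F y \<le> (of_nat y - of_nat x) * F z"
proof (cases "x = z")
  case True thus ?thesis by (simp add: algebra_simps)
next
  case False
  hence xz: "x < z" using assms by simp
  define c where "c = F z - F (z - 1)"
  have lo: "(of_nat z - of_nat x) * c \<le> F z - F x"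
  proof (rule sum_lower)
    show "x \<le> z" using xz by simp
    show "\<forall>t. x \<le> t \<longrightarrow> t < z \<longrightarrow> c \<le> F (Suc t) - F t"
    proof (intro allI impI)
      fix t assume "x \<le> t" "t < z"
      have "F (z - 1 + 1) - F (z - 1) \<le> F (t+1) - F t"
        using slope_mono[OF conc, of t "z-1"] \<open>t<z\<close> assms by simp
      thus "c \<le> F (Suc t) - F t" using xz unfolding c_def by simp
    qed
  qed
  have hi: "F y - F z \<le> (of_nat y - of_nat z) * c"
  proof (rule sum_upper)
    show "z \<le> y" by fact
    show "\<forall>t. z \<le> t \<longrightarrow> t < y \<longrightarrow> F (Suc t) - F t \<le> c"
    proof (intro allI impI)
      fix t assume "z \<le> t" "t < y"
      have "F (t + 1) - F t \<le> F (z - 1 + 1) - F (z - 1)"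
        using slope_mono[OF conc, of "z-1" t] \<open>z\<le>t\<close> \<open>t<y\<close> assms by simp
      thus "F (Suc t) - F t \<le> c" using xz unfolding c_def by simp
    qed
  qed
  have A: "0 \<le> (of_nat y - of_nat z :: rat)" using assms by simp
  have B: "0 \<le> (of_nat z - of_nat x :: rat)" using assms by simp
  have 1: "(of_nat y - of_nat z) * ((of_nat z - of_nat x) * c) \<le> (of_nat y - of_nat z) * (F z - F x)"
    using mult_left_mono[OF lo A] .
  have 2: "(of_nat z - of_nat x) * (F y - F z) \<le> (of_nat z - of_nat x) * ((of_nat y - of_nat z) * c)"
    using mult_left_mono[OF hi B] .
  show ?thesis using 1 2 by (simp add: algebra_simps)
qed


definition tight :: "(nat \<Rightarrow> int) \<Rightarrow> nat \<Rightarrow> rat \<Rightarrow> nat \<Rightarrow> bool" where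
  "tight h N s k \<longleftrightarrow> k \<le> N \<and> (\<forall>y\<le>N. of_int (h y) - s * of_nat y \<le> of_int (h k) - s * of_nat k)"

definition supp :: "(nat \<Rightarrow> int) \<Rightarrow> nat \<Rightarrow> rat \<Rightarrow> rat \<Rightarrow> nat \<Rightarrow> bool" where
  "supp h N D s k \<longleftrightarrow> (\<forall>y\<le>N. of_int (h y) - s * of_nat y \<le> of_int (h k) - s * of_nat k + D)"

lemma between_supp:
  assumes nc: "near_concave D n f" and tx: "tight f n s x" and ty: "tight f n s y"
    and xz: "x \<le> z" and zy: "z \<le> y"
  shows "supp f n D s z"
proof -
  obtain fh where conc: "concave_on_upto n fh"
    and bd: "\<forall>i\<le>n. fh i - D \<le> of_int (f i) \<and> of_int (f i) \<le> fh i"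
    using nc unfolding near_concave_def by blast
  have yn: "y \<le> n" and xn: "x \<le> n" using tx ty unfolding tight_def by auto
  define c where "c = of_int (f x) - s * of_nat x"
  have cy: "of_int (f y) - s * of_nat y = c"
    using tx ty yn xn unfolding tight_def c_def by (meson order_antisym)
  have fx: "c + s * of_nat x \<le> fh x" using bd xn unfolding c_def by auto
  have fy: "c + s * of_nat y \<le> fh y" using bd yn cy by force
  have ch: "(of_nat y - of_nat z) * fh x + (of_nat z - of_nat x) * fh y \<le> (of_nat y - of_nat x) * fh z"
    using chord[OF conc xz zy yn] .
  have A: "0 \<le> (of_nat y - of_nat z :: rat)" using zy by simp
  have B: "0 \<le> (of_nat z - of_nat x :: rat)" using xz by simp
  have 1: "(of_nat y - of_nat z) * (c + s * of_nat x) \<le> (of_nat y - of_nat z) * fh x"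
    using mult_left_mono[OF fx A] .
  have 2: "(of_nat z - of_nat x) * (c + s * of_nat y) \<le> (of_nat z - of_nat x) * fh y"
    using mult_left_mono[OF fy B] .
  have eq: "(of_nat y - of_nat z) * (c + s * of_nat x) + (of_nat z - of_nat x) * (c + s * of_nat y)
      = (of_nat y - of_nat x) * (c + s * of_nat z :: rat)" by (simp add: algebra_simps)
  have fz: "c + s * of_nat z - D \<le> of_int (f z)"
  proof (cases "x < y")
    case True
    have "(of_nat y - of_nat x) * (c + s * of_nat z) \<le> (of_nat y - of_nat x) * fh z"
      using 1 2 ch eq by linarith
    moreover have "(0::rat) < of_nat y - of_nat x" using True by simp
    ultimately have "c + s * of_nat z \<le> fh z" by (meson mult_le_cancel_left_pos)
    moreover have "fh z - D \<le> of_int (f z)" using bd zy yn by auto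
    ultimately show ?thesis by linarith
  next
    case False
    hence "z = x" using xz zy by simp
    moreover have "0 \<le> D" using bd xn by force
    ultimately show ?thesis unfolding c_def by simp
  qed
  show ?thesis unfolding supp_def
  proof (intro allI impI)
    fix w assume "w \<le> n"
    hence "of_int (f w) - s * of_nat w \<le> c" using tx unfolding tight_def c_def by auto
    thus "of_int (f w) - s * of_nat w \<le> of_int (f z) - s * of_nat z + D" using fz by linarith
  qed
qed


lemma alg1:
  fixes X Y Z K hx hy hz s :: rat
  assumes "Z < K" "K < Y" "hy = hx + s*(Y - X)" "hz > hx + s*(Z - X)"
  shows "((Y-K)*hz + (K-Z)*hy)/(Y-Z) > hx + s*(K-X)"
proof -
  have "(Y-K)*hz > (Y-K)*(hx + s*(Z-X))" using assms by (intro mult_strict_left_mono) auto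
  moreover have "(Y-K)*(hx + s*(Z-X)) + (K-Z)*(hx + s*(Y-X)) = (Y-Z)*(hx + s*(K-X))"
    by (simp add: algebra_simps)
  moreover have "(K-Z)*hy = (K-Z)*(hx + s*(Y-X))" using assms(3) by simp
  ultimately have "(Y-K)*hz + (K-Z)*hy > (Y-Z)*(hx + s*(K-X))" by linarith
  moreover have "Y - Z > 0" using assms by simp
  ultimately show ?thesis by (simp add: pos_less_divide_eq mult.commute)
qed

lemma alg2:
  fixes X Z K hx hz s :: rat
  assumes "X < K" "K < Z" "hz > hx + s*(Z - X)"
  shows "((Z-K)*hx + (K-X)*hz)/(Z-X) > hx + s*(K-X)"
proof -
  have "(K-X)*hz > (K-X)*(hx + s*(Z-X))" using assms by (intro mult_strict_left_mono) auto
  moreover have "(Z-K)*hx + (K-X)*(hx + s*(Z-X)) = (Z-X)*(hx + s*(K-X))"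
    by (simp add: algebra_simps)
  ultimately have "(Z-K)*hx + (K-X)*hz > (Z-X)*(hx + s*(K-X))" by linarith
  moreover have "Z - X > 0" using assms by simp
  ultimately show ?thesis by (simp add: pos_less_divide_eq mult.commute)
qed

lemma alg3:
  fixes X Y K hx hy s :: rat
  assumes "X < Y" "s = (hy - hx)/(Y - X)"
  shows "hy = hx + s*(Y - X)" "((Y-K)*hx + (K-X)*hy)/(Y-X) = hx + s*(K-X)"
proof -
  show 1: "hy = hx + s*(Y - X)" using assms by (simp add: field_simps)
  have "((Y-K)*hx + (K-X)*(hx + s*(Y - X)))/(Y-X) = hx + s*(K-X)" using assms(1)
    by (simp add: field_simps)
  thus "((Y-K)*hx + (K-X)*hy)/(Y-X) = hx + s*(K-X)" using 1 by simp
qed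

lemma alg4:
  fixes Z K W hz hk hw s :: rat
  assumes "Z < K" "K < W" "s = (hk - hz)/(K - Z)" "((W-K)*hz + (K-Z)*hw)/(W-Z) \<le> hk"
  shows "hw - s*W \<le> hk - s*K"
proof -
  have "(W-K)*hz + (K-Z)*hw \<le> (W-Z)*hk" using assms(4) assms(1,2)
    by (simp add: divide_le_eq mult.commute)
  moreover have "s*(K-Z) = hk - hz" using assms by simp
  ultimately have e: "(K-Z)*(s*(W-K)) = (W-K)*(hk-hz)"
    by (metis mult.commute mult.left_commute)
  have "(K-Z)*(hw - hk) \<le> (W-K)*(hk-hz)"
  proof -
    have "(K-Z)*(hw - hk) - (W-K)*(hk-hz) = (W-K)*hz + (K-Z)*hw - (W-Z)*hk"
      by (simp add: algebra_simps)
    thus ?thesis using \<open>(W-K)*hz + (K-Z)*hw \<le> (W-Z)*hk\<close> by linarith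
  qed
  hence "(K-Z)*(hw - hk) \<le> (K-Z)*(s*(W-K))" by (subst e)
  hence "hw - hk \<le> s*(W-K)" using assms(1) by simp
  thus ?thesis by (simp add: algebra_simps)
qed

definition cv :: "(nat \<Rightarrow> int) \<Rightarrow> nat \<Rightarrow> nat \<Rightarrow> nat \<Rightarrow> rat" where
  "cv h k x y = ((of_nat y - of_nat k) * of_int (h x) + (of_nat k - of_nat x) * of_int (h y)) / (of_nat y - of_nat x)"


lemma exists_tight:
  assumes kN: "k \<le> N"
  shows "\<exists>s y1 y2. y1 \<le> k \<and> k \<le> y2 \<and> tight h N s y1 \<and> tight h N s y2"
proof (cases "\<exists>x y. x < k \<and> k < y \<and> y \<le> N \<and> cv h k x y > of_int (h k)")
  case True
  define P where "P = {(x,y). x < k \<and> k < y \<and> y \<le> N}"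
  have fin: "finite P"
    by (rule finite_subset[of _ "{..N} \<times> {..N}"]) (auto simp: P_def)
  from True obtain x0 y0 where p0: "(x0,y0) \<in> P" "cv h k x0 y0 > of_int (h k)"
    unfolding P_def by auto
  define V where "V = Max ((\<lambda>(x,y). cv h k x y) ` P)"
  have "V \<in> (\<lambda>(x,y). cv h k x y) ` P" unfolding V_def using fin p0 by (intro Max_in) auto
  then obtain x y where xy: "(x,y) \<in> P" "cv h k x y = V" by auto
  have maxV: "\<And>a b. (a,b) \<in> P \<Longrightarrow> cv h k a b \<le> V"
    unfolding V_def using fin by (intro Max_ge) force+
  have Vgt: "V > of_int (h k)" using maxV[OF p0(1)] p0(2) by linarith
  have xk: "x < k" and ky: "k < y" and yN: "y \<le> N" using xy unfolding P_def by auto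
  define s where "s = (of_int (h y) - of_int (h x)) / (of_nat y - of_nat x :: rat)"
  have XY: "(of_nat x :: rat) < of_nat y" using xk ky by simp
  have hy: "of_int (h y) = of_int (h x) + s * (of_nat y - of_nat x)"
    using alg3(1)[OF XY s_def] .
  have Veq: "V = of_int (h x) + s * (of_nat k - of_nat x)"
    using alg3(2)[OF XY s_def, of "of_nat k"] xy(2) unfolding cv_def by simp
  have tx: "tight h N s x"
    unfolding tight_def
  proof (intro conjI allI impI)
    show "x \<le> N" using xk ky yN by simp
    fix z assume zN: "z \<le> N"
    show "of_int (h z) - s * of_nat z \<le> of_int (h x) - s * of_nat x"
    proof (rule ccontr)
      assume "\<not> ?thesis"
      hence gt: "of_int (h z) > of_int (h x) + s * (of_nat z - of_nat x)"
        by (simp add: algebra_simps)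
      consider "z < k" | "z = k" | "z > k" by linarith
      then show False
      proof cases
        case 1
        hence "(z,y) \<in> P" using ky yN unfolding P_def by auto
        hence "cv h k z y \<le> V" by (rule maxV)
        moreover have "cv h k z y > of_int (h x) + s * (of_nat k - of_nat x)"
          unfolding cv_def
          by (rule alg1) (use 1 ky hy gt in auto)
        ultimately show False using Veq by linarith
      next
        case 2
        thus False using gt Veq Vgt by simp
      next
        case 3
        hence "(x,z) \<in> P" using xk zN unfolding P_def by auto
        hence "cv h k x z \<le> V" by (rule maxV)
        moreover have "cv h k x z > of_int (h x) + s * (of_nat k - of_nat x)"
          unfolding cv_def
          by (rule alg2) (use 3 xk gt in auto)
        ultimately show False using Veq by linarith
      qed
    qed
  qed
  have eqxy: "of_int (h y) - s * of_nat y = of_int (h x) - s * of_nat x"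
    using hy by (simp add: algebra_simps)
  have ty: "tight h N s y"
    using tx yN eqxy unfolding tight_def by simp
  show ?thesis using tx ty xk ky by (intro exI[of _ s] exI[of _ x] exI[of _ y]) auto
next
  case False
  hence cvle: "\<And>x y. x<k \<Longrightarrow> k<y \<Longrightarrow> y\<le>N \<Longrightarrow> cv h k x y \<le> of_int (h k)"
    by (meson not_less)
  have "\<exists>s. tight h N s k"
  proof (cases "k = 0")
    case True
    define s where "s = (\<Sum>w\<le>N. \<bar>of_int (h w) - of_int (h 0)\<bar> :: rat)"
    have s0: "0 \<le> s" unfolding s_def by (rule sum_nonneg) auto
    have "tight h N s 0" unfolding tight_def
    proof (intro conjI allI impI)
      fix w assume wN: "w \<le> N"
      show "of_int (h w) - s * of_nat w \<le> of_int (h 0) - s * of_nat 0"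
      proof (cases "w = 0")
        case True thus ?thesis by simp
      next
        case False
        have "\<bar>of_int (h w) - of_int (h 0)\<bar> \<le> s" unfolding s_def
          by (rule member_le_sum[where f="\<lambda>w. \<bar>of_int (h w) - of_int (h 0)\<bar> :: rat"]) (use wN in auto)
        moreover have "s \<le> s * of_nat w" using s0 False
          by (metis mult.right_neutral mult_left_mono of_nat_1 of_nat_le_iff less_one not_less)
        ultimately show ?thesis by simp
      qed
    qed simp
    thus ?thesis using True by blast
  next
    case False
    define S where "S = (\<lambda>z. (of_int (h k) - of_int (h z)) / (of_nat k - of_nat z :: rat)) ` {..<k}"
    define s where "s = Min S"
    have finS: "finite S" and neS: "S \<noteq> {}" unfolding S_def using False by auto
    have "s \<in> S" unfolding s_def using finS neS by (rule Min_in)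
    then obtain z0 where z0: "z0 < k" "s = (of_int (h k) - of_int (h z0)) / (of_nat k - of_nat z0)"
      unfolding S_def by auto
    have sle: "\<And>z. z < k \<Longrightarrow> s \<le> (of_int (h k) - of_int (h z)) / (of_nat k - of_nat z)"
      unfolding s_def S_def using finS by (intro Min_le) (auto simp: S_def)
    have "tight h N s k" unfolding tight_def
    proof (intro conjI allI impI)
      show "k \<le> N" by fact
      fix w assume wN: "w \<le> N"
      consider "w < k" | "w = k" | "w > k" by linarith
      then show "of_int (h w) - s * of_nat w \<le> of_int (h k) - s * of_nat k"
      proof cases
        case 1
        have pos: "(0::rat) < of_nat k - of_nat w" using 1 by simp
        have "s \<le> (of_int (h k) - of_int (h w)) / (of_nat k - of_nat w)" using sle[OF 1] .
        hence "s * (of_nat k - of_nat w) \<le> of_int (h k) - of_int (h w)"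
          using pos by (simp add: le_divide_eq)
        thus ?thesis by (simp add: algebra_simps)
      next
        case 2 thus ?thesis by simp
      next
        case 3
        show ?thesis
          by (rule alg4[where Z="of_nat z0" and hz="of_int (h z0)"])
             (use z0 3 cvle[OF z0(1) 3 wN] in \<open>auto simp: cv_def\<close>)
      qed
    qed
    thus ?thesis by blast
  qed
  thus ?thesis by blast
qed


lemma supp_near_concave:
  assumes "\<forall>k\<le>N. \<exists>s. supp h N D s k"
  shows "near_concave D N h"
proof -
  define sl where "sl k = (SOME s. supp h N D s k)" for k
  have sl: "\<And>k. k \<le> N \<Longrightarrow> supp h N D (sl k) k"
    unfolding sl_def using assms by (metis someI_ex)
  define L where "L c x = of_int (h c) + D + sl c * (of_nat x - of_nat c)" for c x :: nat
  define H where "H x = Min ((\<lambda>c. L c x) ` {..N})" for x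
  have Hle: "\<And>c x. c \<le> N \<Longrightarrow> H x \<le> L c x" unfolding H_def by (rule Min_le) auto
  have Hin: "\<And>x. \<exists>c\<le>N. H x = L c x"
  proof -
    fix x
    have "H x \<in> (\<lambda>c. L c x) ` {..N}" unfolding H_def by (rule Min_in) auto
    thus "\<exists>c\<le>N. H x = L c x" by auto
  qed
  have conc: "concave_on_upto N H"
    unfolding concave_on_upto_def convex_on_upto_def
  proof (intro allI impI)
    fix i assume i: "1 \<le> i \<and> i \<le> N - 1"
    obtain c where c: "c \<le> N" "H i = L c i" using Hin by blast
    have "H (i-1) \<le> L c (i-1)" "H (i+1) \<le> L c (i+1)" using Hle c by auto
    moreover have "L c (i-1) + L c (i+1) = 2 * L c i" unfolding L_def using i
      by (simp add: of_nat_diff algebra_simps)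
    ultimately show "- H i - - H (i - 1) \<le> - H (i + 1) - - H i" using c by linarith
  qed
  have bounds: "\<forall>i\<le>N. H i - D \<le> of_int (h i) \<and> of_int (h i) \<le> H i"
  proof (intro allI impI conjI)
    fix i assume iN: "i \<le> N"
    have "H i \<le> L i i" using Hle iN by simp
    thus "H i - D \<le> of_int (h i)" unfolding L_def by simp
    obtain c where c: "c \<le> N" "H i = L c i" using Hin by blast
    have "of_int (h i) - sl c * of_nat i \<le> of_int (h c) - sl c * of_nat c + D"
      using sl[OF c(1)] iN unfolding supp_def by blast
    thus "of_int (h i) \<le> H i" using c unfolding L_def by (simp add: algebra_simps)
  qed
  show ?thesis unfolding near_concave_def using conc bounds by blast
qed

lemma mpc_fin: "finite {f i + g j | i j. i \<le> n \<and> j \<le> (m::nat) \<and> i + j = k}"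
  by (rule finite_subset[of _ "(\<lambda>(i,j). f i + g j) ` ({..n} \<times> {..m})"]) auto

lemma mpc_ge: "i \<le> n \<Longrightarrow> j \<le> m \<Longrightarrow> f i + g j \<le> maxplus_conv n m f g (i+j)"
  unfolding maxplus_conv_def by (rule Max_ge[OF mpc_fin]) blast

lemma mpc_in:
  assumes "k \<le> n + m"
  shows "\<exists>i j. i \<le> n \<and> j \<le> m \<and> i + j = k \<and> maxplus_conv n m f g k = f i + g j"
proof -
  have ne: "{f i + g j | i j. i \<le> n \<and> j \<le> m \<and> i + j = k} \<noteq> {}"
  proof -
    have "min k n \<le> n" "k - min k n \<le> m" "min k n + (k - min k n) = k" using assms by auto
    thus ?thesis by blast
  qed
  have "maxplus_conv n m f g k \<in> {f i + g j | i j. i \<le> n \<and> j \<le> m \<and> i + j = k}"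
    unfolding maxplus_conv_def by (rule Max_in[OF mpc_fin ne])
  thus ?thesis by auto
qed

lemma tight_transfer:
  assumes t: "tight (maxplus_conv n m f g) (n+m) s (i+j)" and ij: "i \<le> n" "j \<le> m"
    and eq: "maxplus_conv n m f g (i+j) = f i + g j"
  shows "tight f n s i \<and> tight g m s j"
proof -
  let ?h = "maxplus_conv n m f g"
  have T: "\<And>y. y \<le> n + m \<Longrightarrow> of_int (?h y) - s * of_nat y \<le> of_int (f i + g j) - s * of_nat (i+j)"
    using t eq unfolding tight_def by simp
  have "tight f n s i" unfolding tight_def
  proof (intro conjI allI impI)
    fix a assume a: "a \<le> n"
    have "f a + g j \<le> ?h (a+j)" using mpc_ge a ij by blast
    hence "of_int (f a + g j) \<le> (of_int (?h (a+j)) :: rat)" by (simp only: of_int_le_iff)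
    moreover have "a+j \<le> n + m" using a ij by simp
    ultimately have "of_int (f a + g j) - s * of_nat (a+j) \<le> of_int (f i + g j) - s * of_nat (i+j)"
      using T[of "a+j"] by linarith
    thus "of_int (f a) - s * of_nat a \<le> of_int (f i) - s * of_nat i"
      by (simp add: algebra_simps)
  qed (use ij in auto)
  moreover have "tight g m s j" unfolding tight_def
  proof (intro conjI allI impI)
    fix b assume b: "b \<le> m"
    have "f i + g b \<le> ?h (i+b)" using mpc_ge b ij by blast
    hence "of_int (f i + g b) \<le> (of_int (?h (i+b)) :: rat)" by (simp only: of_int_le_iff)
    moreover have "i+b \<le> n + m" using b ij by simp
    ultimately have "of_int (f i + g b) - s * of_nat (i+b) \<le> of_int (f i + g j) - s * of_nat (i+j)"
      using T[of "i+b"] by linarith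
    thus "of_int (g b) - s * of_nat b \<le> of_int (g j) - s * of_nat j"
      by (simp add: algebra_simps)
  qed (use ij in auto)
  ultimately show ?thesis ..
qed

theorem mainTheorem5:
  fixes f g :: "nat \<Rightarrow> int" and n m :: nat and \<Delta>f \<Delta>g :: rat
  assumes "\<Delta>f \<ge> 0" and "\<Delta>g \<ge> 0"
    and "near_concave \<Delta>f n f" and "near_concave \<Delta>g m g"
  shows "near_concave (max \<Delta>f \<Delta>g) (n + m) (maxplus_conv n m f g)"
proof (rule supp_near_concave, intro allI impI)
  let ?h = "maxplus_conv n m f g"
  fix k assume kN: "k \<le> n + m"
  obtain s y1 y2 where y: "y1 \<le> k" "k \<le> y2" "tight ?h (n+m) s y1" "tight ?h (n+m) s y2"
    using exists_tight[OF kN] by blast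
  have y2N: "y2 \<le> n + m" using y unfolding tight_def by simp
  obtain i1 j1 where d1: "i1 \<le> n" "j1 \<le> m" "i1 + j1 = y1" "?h y1 = f i1 + g j1"
    using mpc_in[of y1 n m f g] y kN by fastforce
  obtain i2 j2 where d2: "i2 \<le> n" "j2 \<le> m" "i2 + j2 = y2" "?h y2 = f i2 + g j2"
    using mpc_in[OF y2N, of f g] by blast
  have t1: "tight f n s i1" "tight g m s j1" using tight_transfer[of n m f g s i1 j1] d1 y by auto
  have t2: "tight f n s i2" "tight g m s j2" using tight_transfer[of n m f g s i2 j2] d2 y by auto
  have key: "\<exists>a b Da Db. a \<le> n \<and> b \<le> m \<and> a + b = k \<and> Da + Db \<le> max \<Delta>f \<Delta>g \<and>
     supp f n Da s a \<and> supp g m Db s b"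
  proof (cases "k \<le> i1 + j2")
    case True
    have "supp g m \<Delta>g s (k - i1)"
      by (rule between_supp[OF assms(4) t1(2) t2(2)]) (use True d1 y in auto)
    moreover have "supp f n 0 s i1" using t1(1) unfolding tight_def supp_def by simp
    ultimately show ?thesis using True d1 d2 y
      by (intro exI[of _ i1] exI[of _ "k - i1"] exI[of _ 0] exI[of _ \<Delta>g]) auto
  next
    case False
    have "supp f n \<Delta>f s (k - j2)"
      by (rule between_supp[OF assms(3) t1(1) t2(1)]) (use False d1 d2 y in auto)
    moreover have "supp g m 0 s j2" using t2(2) unfolding tight_def supp_def by simp
    ultimately show ?thesis using False d1 d2 y
      by (intro exI[of _ "k - j2"] exI[of _ j2] exI[of _ \<Delta>f] exI[of _ 0]) auto
  qed
  then obtain a b Da Db where ab: "a \<le> n" "b \<le> m" "a + b = k" "Da + Db \<le> max \<Delta>f \<Delta>g"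
    "supp f n Da s a" "supp g m Db s b" by blast
  have hk: "f a + g b \<le> ?h k" using mpc_ge[OF ab(1,2)] ab(3) by simp
  show "\<exists>s. supp ?h (n+m) (max \<Delta>f \<Delta>g) s k"
  proof (intro exI[of _ s])
    show "supp ?h (n+m) (max \<Delta>f \<Delta>g) s k" unfolding supp_def
    proof (intro allI impI)
      fix y assume yN: "y \<le> n + m"
      obtain a' b' where d: "a' \<le> n" "b' \<le> m" "a' + b' = y" "?h y = f a' + g b'"
        using mpc_in[OF yN, of f g] by blast
      have 1: "of_int (f a') - s * of_nat a' \<le> of_int (f a) - s * of_nat a + Da"
        using ab(5) d(1) unfolding supp_def by blast
      have 2: "of_int (g b') - s * of_nat b' \<le> of_int (g b) - s * of_nat b + Db"
        using ab(6) d(2) unfolding supp_def by blast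
      have 3: "of_int (f a) + of_int (g b) \<le> (of_int (?h k) :: rat)" using hk
        by (metis of_int_add of_int_le_iff)
      show "of_int (?h y) - s * of_nat y \<le> of_int (?h k) - s * of_nat k + max \<Delta>f \<Delta>g"
      proof -
        have e1: "s * of_nat k = s * of_nat a + s * of_nat b"
          using ab(3) by (simp flip: ab(3) add: distrib_left)
        have e2: "s * of_nat y = s * of_nat a' + s * of_nat b'"
          using d(3) by (simp flip: d(3) add: distrib_left)
        have e3: "(of_int (?h y) :: rat) = of_int (f a') + of_int (g b')" using d(4) by simp
        show ?thesis using 1 2 3 e1 e2 e3 ab(4) by linarith
      qed
    qed
  qed
qed

end
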